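(* Let $T$ be a generalized tree-like graph with parameters $n_o\ge1$, $k_c$, $\hat k_b\ge1$ and $k=n_ok_c-(n_o-1)\hat k_b$ clients, and assume $k_c>\bar k_b$, where $\bar k_b=2\hat k_b$ if $n_o\ge3$, $\bar k_b=\hat k_b$ if $n_o=2$, $\bar k_b=0$ if $n_o=1$ (equivalently: every $o_i$ has a client neighbour adjacent to no other orchestrator vertex). Let $G_{er}$ be the enhanced ring graph on the $k$ clients obtained from $T$ by applying, for $i=1,\dots,n_o$, the rule $H\mapsto\tau_{o_i}(H)-o_i$. Let $T'$ be a generalized tree-like graph with parameters $n_o$, $k_c'=k_c-1$, $\hat k_b$ (hence with $k'=k-n_o$ clients and $k'+n_o=k$ vertices in total). Then there is a bijection between the vertex sets of $T'$ and $G_{er}$ under which $G_{er}$ is obtained from $T'$ by a sequence of local complementations (namely at the orchestrator vertices $o'_1,\dots,o'_{n_o}$ of $T'$). Consequently the graph state $\ket{G_{er}}$ is local-Clifford equivalent (up to relabelling of qubits) to the $k$-qubit generalized tree-like graph state $\ket{T'}$.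
   Context: All graphs are finite, simple and undirected. For $H=(V,E)$ and $a\in V$, $N_a=\{b:\{a,b\}\in E\}$; the local complementation $\tau_a(H)$ toggles the edge $\{b,c\}$ for every pair of distinct $b,c\in N_a$; $H-a$ deletes $a$ and its incident edges. Graph state $\ket{H}=\prod_{\{a,b\}\in E}\mathrm{CZ}_{ab}\ket{+}^{\otimes|V|}$. Two graph states are local-Clifford (LC) equivalent iff their graphs are related by a sequence of local complementations. Generalized tree-like graph with parameters $n_o\ge1$, $k_c$, $\hat k_b\ge1$: vertex set $\{o_1,\dots,o_{n_o}\}\cup V_c$ (disjoint) such that (i) every edge joins some $o_i$ to a client in $V_c$; (ii) $|N_{o_i}|=k_c$ for all $i$; (iii) $|N_{o_i}\cap N_{o_{i+1}}|=\hat k_b$ for $1\le i<n_o$; (iv) $N_{o_i}\cap N_{o_j}=\emptyset$ for $|i-j|\ge2$; (v) every client is adjacent to some $o_i$. Then $|V_c|=n_ok_c-(n_o-1)\hat k_b$. *)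

theory Defs
  imports Main
begin

definition simple_graph :: "'a set \<Rightarrow> 'a set set \<Rightarrow> bool" where
  "simple_graph V E \<longleftrightarrow> finite V \<and>
     (\<forall>e\<in>E. \<exists>a b. e = {a, b} \<and> a \<noteq> b \<and> a \<in> V \<and> b \<in> V)"

definition nbhd :: "'a set set \<Rightarrow> 'a \<Rightarrow> 'a set" where
  "nbhd E a = {b. {a, b} \<in> E}"

definition local_comp :: "'a set set \<Rightarrow> 'a \<Rightarrow> 'a set set" where
  "local_comp E a =
     (let X = {{b, c} | b c. b \<in> nbhd E a \<and> c \<in> nbhd E a \<and> b \<noteq> c}
      in (E - X) \<union> (X - E))"

definition local_comp_seq :: "'a set set \<Rightarrow> 'a list \<Rightarrow> 'a set set" where
  "local_comp_seq E as = fold (\<lambda>a H. local_comp H a) as E"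

definition lc_delete :: "'a \<Rightarrow> 'a set \<times> 'a set set \<Rightarrow> 'a set \<times> 'a set set" where
  "lc_delete a H = (fst H - {a}, {e \<in> local_comp (snd H) a. a \<notin> e})"

definition lc_delete_seq :: "'a list \<Rightarrow> 'a set \<times> 'a set set \<Rightarrow> 'a set \<times> 'a set set" where
  "lc_delete_seq as H = fold lc_delete as H"

text \<open>Generalized tree-like graph with orchestrators o 1, ..., o n_o and client set V - o`{1..n_o}.\<close>
definition gen_tree_like ::
  "'a set \<Rightarrow> 'a set set \<Rightarrow> (nat \<Rightarrow> 'a) \<Rightarrow> nat \<Rightarrow> nat \<Rightarrow> nat \<Rightarrow> bool" where
  "gen_tree_like V E orc n_o k_c kb \<longleftrightarrow>
     simple_graph V E \<and> n_o \<ge> 1 \<and> kb \<ge> 1 \<and>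
     inj_on orc {1..n_o} \<and> orc ` {1..n_o} \<subseteq> V \<and>
     (\<forall>e\<in>E. \<exists>i\<in>{1..n_o}. \<exists>c\<in>V - orc ` {1..n_o}. e = {orc i, c}) \<and>
     (\<forall>i\<in>{1..n_o}. card (nbhd E (orc i)) = k_c) \<and>
     (\<forall>i. 1 \<le> i \<and> i < n_o \<longrightarrow> card (nbhd E (orc i) \<inter> nbhd E (orc (Suc i))) = kb) \<and>
     (\<forall>i\<in>{1..n_o}. \<forall>j\<in>{1..n_o}. i + 2 \<le> j \<longrightarrow> nbhd E (orc i) \<inter> nbhd E (orc j) = {}) \<and>
     (\<forall>c\<in>V - orc ` {1..n_o}. \<exists>i\<in>{1..n_o}. c \<in> nbhd E (orc i))"

definition kbar :: "nat \<Rightarrow> nat \<Rightarrow> nat" where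
  "kbar n_o kb = (if n_o \<ge> 3 then 2 * kb else if n_o = 2 then kb else 0)"

definition enhanced_ring :: "'a set \<Rightarrow> 'a set set \<Rightarrow> (nat \<Rightarrow> 'a) \<Rightarrow> nat \<Rightarrow> 'a set \<times> 'a set set" where
  "enhanced_ring V E orc n_o = lc_delete_seq (map orc [1..<Suc n_o]) (V, E)"

end

theory Submission
  imports Defs
begin

definition symd :: "'a set \<Rightarrow> 'a set \<Rightarrow> 'a set" where
  "symd A B = (A - B) \<union> (B - A)"

definition Kl :: "'a set \<Rightarrow> 'a set set" where
  "Kl S = {{b, c} | b c. b \<in> S \<and> c \<in> S \<and> b \<noteq> c}"

lemma local_comp_symd: "local_comp H a = symd H (Kl (nbhd H a))"
  unfolding local_comp_def symd_def Kl_def Let_def by simp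

primrec Dsym :: "(nat \<Rightarrow> 'a set) \<Rightarrow> nat \<Rightarrow> 'a set set" where
  "Dsym M 0 = {}"
| "Dsym M (Suc m) = symd (Dsym M m) (Kl (M (Suc m)))"

lemma Kl_sub: "e \<in> Kl S \<Longrightarrow> e \<subseteq> S"
  unfolding Kl_def by auto

lemma Dsym_sub: "e \<in> Dsym M m \<Longrightarrow> e \<subseteq> (\<Union>i\<in>{1..m}. M i)"
proof (induction m arbitrary: e)
  case 0
  then show ?case by simp
next
  case (Suc m)
  then have "e \<in> Dsym M m \<or> e \<in> Kl (M (Suc m))" by (auto simp: symd_def)
  then show ?case
  proof
    assume "e \<in> Dsym M m"
    then have "e \<subseteq> (\<Union>i\<in>{1..m}. M i)" by (rule Suc.IH)
    moreover have "(\<Union>i\<in>{1..m}. M i) \<subseteq> (\<Union>i\<in>{1..Suc m}. M i)" by (rule UN_mono) auto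
    ultimately show ?thesis by (rule subset_trans)
  next
    assume "e \<in> Kl (M (Suc m))"
    then have "e \<subseteq> M (Suc m)" by (rule Kl_sub)
    moreover have "M (Suc m) \<subseteq> (\<Union>i\<in>{1..Suc m}. M i)" by (intro UN_upper) auto
    ultimately show ?thesis by (rule subset_trans)
  qed
qed

lemma symd_alg: "A = A' \<union> S \<Longrightarrow> S \<inter> X = {} \<Longrightarrow> A \<inter> X = {} \<Longrightarrow> S \<inter> D = {} \<Longrightarrow>
  symd (A \<union> D) X = A' \<union> symd D (X \<union> S)"
  by (auto simp: symd_def)

lemma Suc_iv: "j \<in> {1..Suc m} \<longleftrightarrow> j \<in> {1..m} \<or> j = Suc m"
  by auto

locale gtl =
  fixes V :: "'a set" and E :: "'a set set" and orc :: "nat \<Rightarrow> 'a"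
    and n k_c kb :: nat
  assumes T: "gen_tree_like V E orc n k_c kb" and kc: "k_c > kbar n kb"
begin

definition C where "C = V - orc ` {1..n}"
definition N where "N i = nbhd E (orc i)"

lemma finV: "finite V" using T unfolding gen_tree_like_def simple_graph_def by auto
lemma n1: "n \<ge> 1" using T unfolding gen_tree_like_def by auto
lemma kb1: "kb \<ge> 1" using T unfolding gen_tree_like_def by auto
lemma inj: "inj_on orc {1..n}" using T unfolding gen_tree_like_def by auto
lemma Eform: "\<forall>e\<in>E. \<exists>i\<in>{1..n}. \<exists>c\<in>C. e = {orc i, c}"
  using T unfolding gen_tree_like_def C_def by auto
lemma cardN: "\<forall>i\<in>{1..n}. card (N i) = k_c"
  using T unfolding gen_tree_like_def N_def by auto
lemma cardI: "\<forall>i. 1 \<le> i \<and> i < n \<longrightarrow> card (N i \<inter> N (Suc i)) = kb"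
  using T unfolding gen_tree_like_def N_def by auto
lemma disj: "\<forall>i\<in>{1..n}. \<forall>j\<in>{1..n}. i + 2 \<le> j \<longrightarrow> N i \<inter> N j = {}"
  using T unfolding gen_tree_like_def N_def by auto
lemma cover: "\<forall>c\<in>C. \<exists>i\<in>{1..n}. c \<in> N i"
  using T unfolding gen_tree_like_def N_def C_def by auto

lemma orc_notC: "i \<in> {1..n} \<Longrightarrow> orc i \<notin> C" by (auto simp: C_def)

lemma finC: "finite C" using finV by (simp add: C_def)

lemma N_sub: "i \<in> {1..n} \<Longrightarrow> N i \<subseteq> C"
proof
  fix b assume i: "i \<in> {1..n}" and b: "b \<in> N i"
  then have "{orc i, b} \<in> E" by (simp add: N_def nbhd_def)
  then obtain j c where j: "j \<in> {1..n}" "c \<in> C" "{orc i, b} = {orc j, c}" using Eform by blast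
  then show "b \<in> C" using orc_notC[OF i] by (auto simp: doubleton_eq_iff)
qed

lemma finN: "i \<in> {1..n} \<Longrightarrow> finite (N i)"
  using finite_subset[OF N_sub finC] .

lemma E_notC: "e \<in> E \<Longrightarrow> \<not> e \<subseteq> C"
  using Eform orc_notC by fastforce

lemma priv_ex: "i \<in> {1..n} \<Longrightarrow> \<exists>x. x \<in> N i \<and> (\<forall>j\<in>{1..n}. j \<noteq> i \<longrightarrow> x \<notin> N j)"
proof -
  assume i: "i \<in> {1..n}"
  define B1 where "B1 = (if 1 < i then N (i - 1) else {})"
  define B2 where "B2 = (if i < n then N (Suc i) else {})"
  have c1: "card (N i \<inter> B1) \<le> (if 1 < i then kb else 0)"
  proof (cases "1 < i")
    case True
    then have "Suc (i - 1) = i" by simp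
    then have "N i \<inter> B1 = N (i - 1) \<inter> N (Suc (i - 1))" using True by (auto simp: B1_def)
    moreover have "1 \<le> i - 1 \<and> i - 1 < n" using True i by auto
    then have "card (N (i - 1) \<inter> N (Suc (i - 1))) = kb" using cardI by blast
    ultimately show ?thesis using True by simp
  next
    case False
    then show ?thesis by (simp add: B1_def)
  qed
  have c2: "card (N i \<inter> B2) \<le> (if i < n then kb else 0)"
  proof (cases "i < n")
    case True
    then have "1 \<le> i \<and> i < n" using i by auto
    then have "card (N i \<inter> N (Suc i)) = kb" using cardI by blast
    then show ?thesis using True by (simp add: B2_def)
  next
    case False
    then show ?thesis by (simp add: B2_def)
  qed
  have k: "(if 1 < i then kb else 0) + (if i < n then kb else 0) \<le> kbar n kb"
    unfolding kbar_def using i by auto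
  have "card (N i \<inter> (B1 \<union> B2)) \<le> card (N i \<inter> B1) + card (N i \<inter> B2)"
    by (metis Int_Un_distrib card_Un_le)
  moreover have "card (N i) = k_c" using cardN i by blast
  ultimately have lt: "card (N i \<inter> (B1 \<union> B2)) < card (N i)"
    using c1 c2 k kc by linarith
  have "\<not> N i \<subseteq> B1 \<union> B2"
  proof
    assume "N i \<subseteq> B1 \<union> B2"
    then have "N i \<inter> (B1 \<union> B2) = N i" by auto
    then show False using lt by simp
  qed
  then obtain x where x: "x \<in> N i" "x \<notin> B1" "x \<notin> B2" by auto
  have "\<forall>j\<in>{1..n}. j \<noteq> i \<longrightarrow> x \<notin> N j"
  proof (intro ballI impI)
    fix j assume j: "j \<in> {1..n}" "j \<noteq> i"
    show "x \<notin> N j"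
    proof
      assume xj: "x \<in> N j"
      have j1: "1 \<le> j" using j by simp
      have "(j = i - 1 \<and> 1 < i) \<or> j = Suc i \<or> i + 2 \<le> j \<or> j + 2 \<le> i" using j1 j(2) by arith
      then consider "j = i - 1 \<and> 1 < i" | "j = Suc i" | "i + 2 \<le> j" | "j + 2 \<le> i" by blast
      then show False
      proof cases
        case 1 then show ?thesis using x xj by (auto simp: B1_def)
      next
        case 2 then have "i < n" using j by auto
        then show ?thesis using x xj 2 by (auto simp: B2_def)
      next
        case 3 then show ?thesis using disj[rule_format, OF i j(1) 3] x xj by blast
      next
        case 4 then show ?thesis using disj[rule_format, OF j(1) i 4] x xj by blast
      qed
    qed
  qed
  then show ?thesis using x by blast
qed

definition p where "p i = (SOME x. x \<in> N i \<and> (\<forall>j\<in>{1..n}. j \<noteq> i \<longrightarrow> x \<notin> N j))"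

lemma p_prop: "i \<in> {1..n} \<Longrightarrow> p i \<in> N i \<and> (\<forall>j\<in>{1..n}. j \<noteq> i \<longrightarrow> p i \<notin> N j)"
  unfolding p_def by (rule someI_ex[OF priv_ex])

lemma p_N: "i \<in> {1..n} \<Longrightarrow> p i \<in> N i" using p_prop by blast

lemma p_in_N_iff:
  assumes i: "i \<in> {1..n}" and j: "j \<in> {1..n}" shows "p j \<in> N i \<longleftrightarrow> j = i"
proof -
  have h: "p j \<in> N j" "\<forall>k\<in>{1..n}. k \<noteq> j \<longrightarrow> p j \<notin> N k" using p_prop[OF j] by auto
  show ?thesis
  proof
    assume "p j \<in> N i"
    then show "j = i" using h(2) i by (metis)
  next
    assume "j = i"
    then show "p j \<in> N i" using h(1) by simp
  qed
qed

lemma p_C: "i \<in> {1..n} \<Longrightarrow> p i \<in> C" using p_N N_sub by blast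

lemma p_inj: "inj_on p {1..n}"
proof (rule inj_onI)
  fix i j assume i: "i \<in> {1..n}" and j: "j \<in> {1..n}" and e: "p i = p j"
  have "p j \<in> N i" using p_N[OF i] e by simp
  then show "i = j" using p_in_N_iff[OF i j] by simp
qed

lemma ER: "m \<le> n \<Longrightarrow> lc_delete_seq (map orc [1..<Suc m]) (V, E) =
   (V - orc ` {1..m}, {e \<in> E. \<forall>j\<in>{1..m}. orc j \<notin> e} \<union> Dsym N m)"
proof (induction m)
  case 0
  then show ?case by (simp add: lc_delete_seq_def)
next
  case (Suc m)
  hence m: "m \<le> n" "Suc m \<le> n" by auto
  let ?a = "orc (Suc m)"
  let ?F = "{e \<in> E. \<forall>j\<in>{1..m}. orc j \<notin> e} \<union> Dsym N m"
  let ?X = "Kl (N (Suc m))"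
  have seq: "lc_delete_seq (map orc [1..<Suc (Suc m)]) (V,E) = lc_delete ?a (V - orc`{1..m}, ?F)"
    using Suc.IH[OF m(1)] by (simp add: lc_delete_seq_def)
  have sm: "Suc m \<in> {1..n}" using m by auto
  have aC: "?a \<notin> C" using sm by (rule orc_notC)
  have Dsub: "e \<subseteq> C" if "e \<in> Dsym N m" for e
  proof -
    have "e \<subseteq> (\<Union>i\<in>{1..m}. N i)" using Dsym_sub that .
    moreover have "(\<Union>i\<in>{1..m}. N i) \<subseteq> C"
    proof (rule UN_least)
      fix i assume "i \<in> {1..m}"
      then have "i \<in> {1..n}" using m by auto
      then show "N i \<subseteq> C" by (rule N_sub)
    qed
    ultimately show ?thesis by blast
  qed
  have Xsub: "e \<subseteq> C" if "e \<in> ?X" for e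
    using Kl_sub[OF that] N_sub[OF sm] by blast
  have nb: "nbhd ?F ?a = N (Suc m)"
  proof (rule set_eqI)
    fix b
    show "b \<in> nbhd ?F ?a \<longleftrightarrow> b \<in> N (Suc m)"
    proof
      assume "b \<in> nbhd ?F ?a"
      then have "{?a, b} \<in> ?F" by (simp add: nbhd_def)
      moreover have "{?a, b} \<notin> Dsym N m" using Dsub aC by blast
      ultimately have "{?a, b} \<in> E" by blast
      then show "b \<in> N (Suc m)" by (simp add: N_def nbhd_def)
    next
      assume b: "b \<in> N (Suc m)"
      then have "{?a, b} \<in> E" by (simp add: N_def nbhd_def)
      moreover have "\<forall>j\<in>{1..m}. orc j \<notin> {?a, b}"
      proof
        fix j assume j: "j \<in> {1..m}"
        then have j': "j \<in> {1..n}" using m by auto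
        have "orc j \<noteq> ?a" using inj_onD[OF inj _ j' sm] j by auto
        moreover have "orc j \<noteq> b" using orc_notC[OF j'] N_sub[OF sm] b by blast
        ultimately show "orc j \<notin> {?a, b}" by simp
      qed
      ultimately have "{?a, b} \<in> ?F" by blast
      then show "b \<in> nbhd ?F ?a" by (simp add: nbhd_def)
    qed
  qed
  have lc: "local_comp ?F ?a = symd ?F ?X" unfolding local_comp_symd nb by (rule refl)
  have iv: "{1..Suc m} = insert (Suc m) {1..m}" by auto
  then have fst_eq: "V - orc ` {1..m} - {?a} = V - orc ` {1..Suc m}"
    by auto
  have snd_eq: "{e \<in> symd ?F ?X. ?a \<notin> e} =
      {e \<in> E. \<forall>j\<in>{1..Suc m}. orc j \<notin> e} \<union> symd (Dsym N m) ?X"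
  proof (rule set_eqI)
    fix e
    show "e \<in> {e \<in> symd ?F ?X. ?a \<notin> e} \<longleftrightarrow>
      e \<in> {e \<in> E. \<forall>j\<in>{1..Suc m}. orc j \<notin> e} \<union> symd (Dsym N m) ?X"
    proof (cases "e \<subseteq> C")
      case True
      then have "e \<notin> E" "?a \<notin> e" using E_notC aC by auto
      then show ?thesis by (auto simp: symd_def)
    next
      case False
      then have "e \<notin> ?X" "e \<notin> Dsym N m" using Xsub Dsub by auto
      then show ?thesis unfolding iv by (auto simp: symd_def)
    qed
  qed
  show ?case unfolding seq lc_delete_def fst_conv snd_conv lc fst_eq snd_eq Dsym.simps by (rule refl)
qed

lemma ER_final: "enhanced_ring V E orc n = (C, Dsym N n)"
proof -
  have e0: "{e \<in> E. \<forall>j\<in>{1..n}. orc j \<notin> e} = {}" using Eform by fastforce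
  show ?thesis unfolding enhanced_ring_def ER[OF order_refl] e0 C_def by simp
qed


definition Egt where
  "Egt m = {{p i, c} | i c. m < i \<and> i \<le> n \<and> c \<in> N i \<and> c \<noteq> p i}"

lemma LC: "m \<le> n \<Longrightarrow> local_comp_seq (Egt 0) (map p [1..<Suc m]) = Egt m \<union> Dsym N m"
proof (induction m)
  case 0
  then show ?case by (simp add: local_comp_seq_def)
next
  case (Suc m)
  hence m: "m \<le> n" "Suc m \<le> n" by auto
  let ?a = "p (Suc m)"
  let ?G = "Egt m \<union> Dsym N m"
  let ?X = "Kl (N (Suc m) - {?a})"
  let ?S = "{{?a, c} | c. c \<in> N (Suc m) \<and> c \<noteq> ?a}"
  have seq: "local_comp_seq (Egt 0) (map p [1..<Suc (Suc m)]) = local_comp ?G ?a"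
    using Suc.IH[OF m(1)] by (simp add: local_comp_seq_def)
  have sm: "Suc m \<in> {1..n}" using m by auto
  have aN: "?a \<in> N (Suc m)" using p_N[OF sm] .
  have Dsub: "?a \<notin> e" if "e \<in> Dsym N m" for e
  proof
    assume ae: "?a \<in> e"
    have "e \<subseteq> (\<Union>i\<in>{1..m}. N i)" using Dsym_sub that .
    then obtain i where i: "i \<in> {1..m}" "?a \<in> N i" using ae by blast
    then have "i \<in> {1..n}" using m by auto
    then show False using p_in_N_iff[OF _ sm] i by auto
  qed
  have nb: "nbhd ?G ?a = N (Suc m) - {?a}"
  proof (rule set_eqI)
    fix b
    show "b \<in> nbhd ?G ?a \<longleftrightarrow> b \<in> N (Suc m) - {?a}"
    proof
      assume "b \<in> nbhd ?G ?a"
      then have "{?a, b} \<in> ?G" by (simp add: nbhd_def)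
      moreover have "{?a, b} \<notin> Dsym N m" using Dsub by blast
      ultimately have "{?a, b} \<in> Egt m" by blast
      then obtain i c where ic: "m < i" "i \<le> n" "c \<in> N i" "c \<noteq> p i" "{?a, b} = {p i, c}"
        unfolding Egt_def by blast
      have i: "i \<in> {1..n}" using ic by auto
      from ic(5) have "(?a = p i \<and> b = c) \<or> (?a = c \<and> b = p i)" by (auto simp: doubleton_eq_iff)
      then show "b \<in> N (Suc m) - {?a}"
      proof
        assume h: "?a = p i \<and> b = c"
        then have "Suc m = i" using inj_onD[OF p_inj _ sm i] by auto
        then show ?thesis using h ic by auto
      next
        assume h: "?a = c \<and> b = p i"
        then have "?a \<in> N i" using ic by simp
        then have "Suc m = i" using p_in_N_iff[OF i sm] by simp
        then show ?thesis using h ic by auto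
      qed
    next
      assume b: "b \<in> N (Suc m) - {?a}"
      then have "{?a, b} \<in> Egt m" unfolding Egt_def using m by blast
      then show "b \<in> nbhd ?G ?a" by (simp add: nbhd_def)
    qed
  qed
  have lc: "local_comp ?G ?a = symd ?G ?X" unfolding local_comp_symd nb by (rule refl)
  have f1: "Egt m = Egt (Suc m) \<union> ?S"
  proof (rule set_eqI)
    fix e
    show "e \<in> Egt m \<longleftrightarrow> e \<in> Egt (Suc m) \<union> ?S"
    proof
      assume "e \<in> Egt m"
      then obtain i c where ic: "m < i" "i \<le> n" "c \<in> N i" "c \<noteq> p i" "e = {p i, c}"
        unfolding Egt_def by blast
      show "e \<in> Egt (Suc m) \<union> ?S"
      proof (cases "i = Suc m")
        case True then show ?thesis using ic by blast
      next
        case False then have "Suc m < i" using ic by auto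
        then show ?thesis using ic unfolding Egt_def by blast
      qed
    next
      assume "e \<in> Egt (Suc m) \<union> ?S"
      then show "e \<in> Egt m"
      proof
        assume "e \<in> Egt (Suc m)"
        then obtain i c where ic: "Suc m < i" "i \<le> n" "c \<in> N i" "c \<noteq> p i" "e = {p i, c}"
          unfolding Egt_def by blast
        then have "m < i" by simp
        then show ?thesis unfolding Egt_def using ic by blast
      next
        assume "e \<in> ?S"
        then show ?thesis unfolding Egt_def using m by blast
      qed
    qed
  qed
  have f2: "Kl (N (Suc m)) = ?X \<union> ?S"
  proof (rule set_eqI)
    fix e
    show "e \<in> Kl (N (Suc m)) \<longleftrightarrow> e \<in> ?X \<union> ?S"
    proof
      assume "e \<in> Kl (N (Suc m))"
      then obtain b c where bc: "b \<in> N (Suc m)" "c \<in> N (Suc m)" "b \<noteq> c" "e = {b, c}"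
        unfolding Kl_def by blast
      show "e \<in> ?X \<union> ?S"
      proof (cases "b = ?a")
        case True then have "e \<in> ?S" using bc by blast
        then show ?thesis by (rule UnI2)
      next
        case F1: False
        show ?thesis
        proof (cases "c = ?a")
          case True then have "e = {?a, b}" using bc by auto
          then have "e \<in> ?S" using bc F1 by blast
          then show ?thesis by (rule UnI2)
        next
          case False
          then have "e \<in> ?X" unfolding Kl_def using bc F1 by blast
          then show ?thesis by (rule UnI1)
        qed
      qed
    next
      assume "e \<in> ?X \<union> ?S"
      then show "e \<in> Kl (N (Suc m))"
      proof (elim UnE)
        assume "e \<in> ?X"
        then obtain b c where "b \<in> N (Suc m) - {?a}" "c \<in> N (Suc m) - {?a}" "b \<noteq> c" "e = {b, c}"
          unfolding Kl_def by blast
        then show ?thesis unfolding Kl_def by blast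
      next
        assume "e \<in> ?S"
        then obtain c where "c \<in> N (Suc m)" "c \<noteq> ?a" "e = {?a, c}" by blast
        then show ?thesis unfolding Kl_def using aN by blast
      qed
    qed
  qed
  have d1: "?S \<inter> ?X = {}"
  proof -
    have "e \<notin> ?X" if "e \<in> ?S" for e
    proof
      assume "e \<in> ?X"
      then have "e \<subseteq> N (Suc m) - {?a}" by (rule Kl_sub)
      moreover have "?a \<in> e" using that by blast
      ultimately show False by blast
    qed
    then show ?thesis by blast
  qed
  have d2: "Egt m \<inter> ?X = {}"
  proof -
    have "e \<notin> ?X" if "e \<in> Egt m" for e
    proof
      assume "e \<in> ?X"
      then have sub: "e \<subseteq> N (Suc m) - {?a}" by (rule Kl_sub)
      obtain i c where ic: "m < i" "i \<le> n" "c \<in> N i" "c \<noteq> p i" "e = {p i, c}"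
        using \<open>e \<in> Egt m\<close> unfolding Egt_def by blast
      have i: "i \<in> {1..n}" using ic by auto
      have "p i \<in> N (Suc m)" "p i \<noteq> ?a" using sub ic by auto
      then show False using p_in_N_iff[OF sm i] by auto
    qed
    then show ?thesis by blast
  qed
  have d3: "?S \<inter> Dsym N m = {}" using Dsub by blast
  have "local_comp ?G ?a = Egt (Suc m) \<union> Dsym N (Suc m)"
    unfolding lc Dsym.simps f2 by (rule symd_alg[OF f1 d1 d2 d3])
  then show ?case using seq by simp
qed

lemma LC_final: "local_comp_seq (Egt 0) (map p [1..<Suc n]) = Dsym N n"
proof -
  have "Egt n = {}" unfolding Egt_def by auto
  then show ?thesis using LC[OF order_refl] by simp
qed

lemma nbE: "i \<in> {1..n} \<Longrightarrow> nbhd (Egt 0) (p i) = N i - {p i}"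
proof (rule set_eqI)
  fix b assume sm: "i \<in> {1..n}"
  show "b \<in> nbhd (Egt 0) (p i) \<longleftrightarrow> b \<in> N i - {p i}"
  proof
    assume "b \<in> nbhd (Egt 0) (p i)"
    then have "{p i, b} \<in> Egt 0" by (simp add: nbhd_def)
    then obtain j c where ic: "0 < j" "j \<le> n" "c \<in> N j" "c \<noteq> p j" "{p i, b} = {p j, c}"
      unfolding Egt_def by blast
    have j: "j \<in> {1..n}" using ic by auto
    from ic(5) have "(p i = p j \<and> b = c) \<or> (p i = c \<and> b = p j)" by (auto simp: doubleton_eq_iff)
    then show "b \<in> N i - {p i}"
    proof
      assume h: "p i = p j \<and> b = c"
      then have "i = j" using inj_onD[OF p_inj _ sm j] by auto
      then show ?thesis using h ic by auto
    next
      assume h: "p i = c \<and> b = p j"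
      then have "p i \<in> N j" using ic by simp
      then have "i = j" using p_in_N_iff[OF j sm] by simp
      then show ?thesis using h ic by auto
    qed
  next
    assume b: "b \<in> N i - {p i}"
    then have "{p i, b} \<in> Egt 0" unfolding Egt_def using sm by force
    then show "b \<in> nbhd (Egt 0) (p i)" by (simp add: nbhd_def)
  qed
qed

lemma GT': "gen_tree_like C (Egt 0) p n (k_c - 1) kb"
proof -
  have sg: "simple_graph C (Egt 0)"
    unfolding simple_graph_def
  proof (intro conjI ballI)
    show "finite C" by (rule finC)
    fix e assume "e \<in> Egt 0"
    then obtain i c where ic: "0 < i" "i \<le> n" "c \<in> N i" "c \<noteq> p i" "e = {p i, c}"
      unfolding Egt_def by blast
    have i: "i \<in> {1..n}" using ic by auto
    show "\<exists>a b. e = {a, b} \<and> a \<noteq> b \<and> a \<in> C \<and> b \<in> C"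
      using ic p_C[OF i] N_sub[OF i] by blast
  qed
  have ed: "\<forall>e\<in>Egt 0. \<exists>i\<in>{1..n}. \<exists>c\<in>C - p ` {1..n}. e = {p i, c}"
  proof
    fix e assume "e \<in> Egt 0"
    then obtain i c where ic: "0 < i" "i \<le> n" "c \<in> N i" "c \<noteq> p i" "e = {p i, c}"
      unfolding Egt_def by blast
    have i: "i \<in> {1..n}" using ic by auto
    have "c \<notin> p ` {1..n}"
    proof
      assume "c \<in> p ` {1..n}"
      then obtain j where j: "j \<in> {1..n}" "c = p j" by blast
      then have "j = i" using p_in_N_iff[OF i j(1)] ic by simp
      then show False using j ic by simp
    qed
    then show "\<exists>i\<in>{1..n}. \<exists>c\<in>C - p ` {1..n}. e = {p i, c}"
      using i ic N_sub[OF i] by blast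
  qed
  have cd: "\<forall>i\<in>{1..n}. card (nbhd (Egt 0) (p i)) = k_c - 1"
  proof
    fix i assume i: "i \<in> {1..n}"
    show "card (nbhd (Egt 0) (p i)) = k_c - 1"
      using nbE[OF i] cardN i p_N[OF i] finN[OF i] by simp
  qed
  have ci: "\<forall>i. 1 \<le> i \<and> i < n \<longrightarrow> card (nbhd (Egt 0) (p i) \<inter> nbhd (Egt 0) (p (Suc i))) = kb"
  proof (intro allI impI)
    fix i assume h: "1 \<le> i \<and> i < n"
    then have i: "i \<in> {1..n}" and si: "Suc i \<in> {1..n}" by auto
    have "p i \<notin> N (Suc i)" "p (Suc i) \<notin> N i"
      using p_in_N_iff[OF si i] p_in_N_iff[OF i si] by auto
    then have "nbhd (Egt 0) (p i) \<inter> nbhd (Egt 0) (p (Suc i)) = N i \<inter> N (Suc i)"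
      using nbE[OF i] nbE[OF si] by auto
    then show "card (nbhd (Egt 0) (p i) \<inter> nbhd (Egt 0) (p (Suc i))) = kb"
      using cardI h by simp
  qed
  have dj: "\<forall>i\<in>{1..n}. \<forall>j\<in>{1..n}. i + 2 \<le> j \<longrightarrow> nbhd (Egt 0) (p i) \<inter> nbhd (Egt 0) (p j) = {}"
  proof (intro ballI impI)
    fix i j assume i: "i \<in> {1..n}" and j: "j \<in> {1..n}" and ij: "i + 2 \<le> j"
    have "N i \<inter> N j = {}" using disj i j ij by blast
    then show "nbhd (Egt 0) (p i) \<inter> nbhd (Egt 0) (p j) = {}"
      using nbE[OF i] nbE[OF j] by auto
  qed
  have cv: "\<forall>c\<in>C - p ` {1..n}. \<exists>i\<in>{1..n}. c \<in> nbhd (Egt 0) (p i)"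
  proof
    fix c assume c: "c \<in> C - p ` {1..n}"
    then obtain i where i: "i \<in> {1..n}" "c \<in> N i" using cover by blast
    then have "c \<noteq> p i" using c by blast
    then show "\<exists>i\<in>{1..n}. c \<in> nbhd (Egt 0) (p i)" using i nbE[OF i(1)] by blast
  qed
  have pC: "p ` {1..n} \<subseteq> C" using p_C by blast
  show ?thesis unfolding gen_tree_like_def
    by (intro conjI sg n1 kb1 p_inj pC ed cd ci dj cv)
qed

end

theorem lemma6:
  fixes V :: "'a set" and E :: "'a set set" and orc :: "nat \<Rightarrow> 'a"
    and n_o k_c kb :: nat
  assumes T: "gen_tree_like V E orc n_o k_c kb"
    and kc: "k_c > kbar n_o kb"
  shows "\<exists>V' E' (orc' :: nat \<Rightarrow> 'a) f.
           gen_tree_like V' E' orc' n_o (k_c - 1) kb \<and>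
           bij_betw f V' (fst (enhanced_ring V E orc n_o)) \<and>
           snd (enhanced_ring V E orc n_o) =
             (\<lambda>e. f ` e) ` local_comp_seq E' (map orc' [1..<Suc n_o])"
proof -
  interpret g: gtl V E orc n_o k_c kb using T kc by (rule gtl.intro)
  have a: "(\<lambda>e. id ` e) ` Dsym g.N n_o = Dsym g.N n_o"
    by (simp only: image_id id_apply image_ident)
  have main: "gen_tree_like g.C (g.Egt 0) g.p n_o (k_c - 1) kb \<and>
           bij_betw id g.C (fst (enhanced_ring V E orc n_o)) \<and>
           snd (enhanced_ring V E orc n_o) =
             (\<lambda>e. id ` e) ` local_comp_seq (g.Egt 0) (map g.p [1..<Suc n_o])"
    unfolding g.ER_final fst_conv snd_conv g.LC_final a
    by (intro conjI g.GT' bij_betw_id refl)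
  show ?thesis
    apply (rule exI[where x = g.C])
    apply (rule exI[where x = "g.Egt 0"])
    apply (rule exI[where x = g.p])
    apply (rule exI[where x = id])
    apply (rule main)
    done
qed

end
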